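(* Let $R\subseteq T$ be an integral extension of rings, let $Q\in\mathrm{Spec}(T)$ and $P=Q\cap R$. Assume that $R$ has a maximal subring $S$ which is integrally closed in $R$, with $(S:R)=P$ and $U(R/P)\not\subseteq S/P$. Then $T$ has a maximal subring $V$ which is integrally closed in $T$ with $(V:T)=Q$.
   Context: All rings are commutative with $1\neq0$ and subrings are unital. A maximal subring of a ring $A$ is a proper subring maximal with respect to inclusion among proper subrings of $A$. For a ring extension $S\subseteq R$, the conductor is $(S:R)=\{x\in R\mid Rx\subseteq S\}$. $U(A)$ denotes the unit group of $A$. *)

theory Defs
  imports Main
begin

definition subring :: "'a::comm_ring_1 set \<Rightarrow> bool" where
  "subring A \<longleftrightarrow> 1 \<in> A \<and> (\<forall>x\<in>A. \<forall>y\<in>A. x - y \<in> A \<and> x * y \<in> A)"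

definition maximal_subring :: "'a::comm_ring_1 set \<Rightarrow> 'a set \<Rightarrow> bool" where
  "maximal_subring S R \<longleftrightarrow> subring S \<and> S \<subset> R \<and>
     (\<forall>S'. subring S' \<and> S \<subseteq> S' \<and> S' \<subset> R \<longrightarrow> S' = S)"

definition integral_over :: "'a::comm_ring_1 set \<Rightarrow> 'a \<Rightarrow> bool" where
  "integral_over A x \<longleftrightarrow>
     (\<exists>n c. (\<forall>i<n. c i \<in> A) \<and> x ^ n + (\<Sum>i<n. c i * x ^ i) = 0)"

definition integrally_closed_in :: "'a::comm_ring_1 set \<Rightarrow> 'a set \<Rightarrow> bool" where
  "integrally_closed_in S R \<longleftrightarrow> (\<forall>x\<in>R. integral_over S x \<longrightarrow> x \<in> S)"

definition integral_extension :: "'a::comm_ring_1 set \<Rightarrow> 'a set \<Rightarrow> bool" where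
  "integral_extension R T \<longleftrightarrow> subring R \<and> subring T \<and> R \<subseteq> T \<and> (\<forall>x\<in>T. integral_over R x)"

definition conductor :: "'a::comm_ring_1 set \<Rightarrow> 'a set \<Rightarrow> 'a set" where
  "conductor S R = {x \<in> R. \<forall>r\<in>R. r * x \<in> S}"

definition ideal_in :: "'a::comm_ring_1 set \<Rightarrow> 'a set \<Rightarrow> bool" where
  "ideal_in I T \<longleftrightarrow> I \<subseteq> T \<and> 0 \<in> I \<and> (\<forall>x\<in>I. \<forall>y\<in>I. x - y \<in> I) \<and> (\<forall>x\<in>I. \<forall>t\<in>T. t * x \<in> I)"

definition prime_ideal_in :: "'a::comm_ring_1 set \<Rightarrow> 'a set \<Rightarrow> bool" where
  "prime_ideal_in Q T \<longleftrightarrow> ideal_in Q T \<and> Q \<noteq> T \<and>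
     (\<forall>a\<in>T. \<forall>b\<in>T. a * b \<in> Q \<longrightarrow> a \<in> Q \<or> b \<in> Q)"

text \<open>Units of R/P not contained in S/P (for an ideal P of R): some class x+P, x in R,
  is a unit of R/P but is not of the form s+P with s in S.\<close>
definition units_quot_not_sub :: "'a::comm_ring_1 set \<Rightarrow> 'a set \<Rightarrow> 'a set \<Rightarrow> bool" where
  "units_quot_not_sub R P S \<longleftrightarrow>
     (\<exists>x\<in>R. (\<exists>y\<in>R. x * y - 1 \<in> P) \<and> \<not> (\<exists>s\<in>S. x - s \<in> P))"

end

theory Submission
  imports Defs "Jordan_Normal_Form.Char_Poly"
begin

lemma sr_one: "subring V \<Longrightarrow> 1 \<in> V" by (simp add: subring_def)
lemma sr_diff: "subring V \<Longrightarrow> a \<in> V \<Longrightarrow> b \<in> V \<Longrightarrow> a - b \<in> V" by (simp add: subring_def)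
lemma sr_mult: "subring V \<Longrightarrow> a \<in> V \<Longrightarrow> b \<in> V \<Longrightarrow> a * b \<in> V" by (simp add: subring_def)
lemma sr_zero: "subring V \<Longrightarrow> 0 \<in> V" using sr_diff[of V 1 1] sr_one by auto
lemma sr_uminus: "subring V \<Longrightarrow> a \<in> V \<Longrightarrow> - a \<in> V" using sr_diff[of V 0 a] sr_zero by auto
lemma sr_add: "subring V \<Longrightarrow> a \<in> V \<Longrightarrow> b \<in> V \<Longrightarrow> a + b \<in> V"
  using sr_diff[of V a "-b"] sr_uminus[of V b] by auto
lemma sr_sum: "subring V \<Longrightarrow> (\<And>i. i \<in> A \<Longrightarrow> f i \<in> V) \<Longrightarrow> sum f A \<in> V"
  by (induction A rule: infinite_finite_induct) (auto simp: sr_zero sr_add)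
lemma sr_prod: "subring V \<Longrightarrow> (\<And>i. i \<in> A \<Longrightarrow> f i \<in> V) \<Longrightarrow> prod f A \<in> V"
  by (induction A rule: infinite_finite_induct) (auto simp: sr_one sr_mult)
lemma sr_power: "subring V \<Longrightarrow> a \<in> V \<Longrightarrow> a ^ n \<in> V"
  by (induction n) (auto simp: sr_one sr_mult)

definition PV :: "'a::comm_ring_1 set \<Rightarrow> 'a poly set" where
  "PV V = {p. \<forall>i. coeff p i \<in> V}"

lemma PV_sr: assumes V: "subring V" shows "subring (PV V)"
  unfolding subring_def
proof (intro conjI ballI)
  show "1 \<in> PV V" unfolding PV_def
  proof (intro CollectI allI)
    fix i show "coeff 1 i \<in> V" using V by (cases i) (simp_all add: sr_one sr_zero)
  qed
next
  fix p q assume p: "p \<in> PV V" and q: "q \<in> PV V"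
  then have pc: "\<And>i. coeff p i \<in> V" and qc: "\<And>i. coeff q i \<in> V" by (simp_all add: PV_def)
  show "p - q \<in> PV V" unfolding PV_def
  proof (intro CollectI allI)
    fix i show "coeff (p - q) i \<in> V" unfolding coeff_diff by (rule sr_diff[OF V pc qc])
  qed
  show "p * q \<in> PV V" unfolding PV_def
  proof (intro CollectI allI)
    fix i show "coeff (p * q) i \<in> V" unfolding coeff_mult
      by (rule sr_sum[OF V], rule sr_mult[OF V pc qc])
  qed
qed

lemma PV_const: assumes V: "subring V" and a: "a \<in> V" shows "[:a:] \<in> PV V"
  unfolding PV_def
proof (intro CollectI allI)
  fix i show "coeff [:a:] i \<in> V" using V a by (cases i) (simp_all add: sr_zero)
qed

lemma PV_monom: assumes V: "subring V" and a: "a \<in> V" shows "monom a k \<in> PV V"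
  unfolding PV_def
proof (intro CollectI allI)
  fix i show "coeff (monom a k) i \<in> V" using V a by (cases "k = i") (simp_all add: sr_zero)
qed

lemma poly_in_sr: assumes W: "subring W" and t: "t \<in> W" shows "p \<in> PV W \<Longrightarrow> poly p t \<in> W"
proof (induction p)
  case 0
  then show ?case using W by (simp add: sr_zero)
next
  case (pCons a p)
  from pCons.prems have c: "\<And>i. coeff (pCons a p) i \<in> W" by (simp add: PV_def)
  have a: "a \<in> W" using c[of 0] by simp
  have "p \<in> PV W" unfolding PV_def
  proof (intro CollectI allI)
    fix i show "coeff p i \<in> W" using c[of "Suc i"] by simp
  qed
  then have "poly p t \<in> W" by (rule pCons.IH)
  then have "a + t * poly p t \<in> W" by (rule sr_add[OF W a sr_mult[OF W t]])
  then show ?case by simp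
qed

lemma integral_of_monic:
  assumes "f \<in> PV V" "coeff f n = 1" "degree f = n" "poly f z = 0"
  shows "integral_over V z"
  unfolding integral_over_def
proof (intro exI conjI)
  show "\<forall>i<n. coeff f i \<in> V" using assms(1) by (auto simp: PV_def)
  have "poly f z = (\<Sum>i\<le>degree f. coeff f i * z ^ i)" by (rule poly_altdef)
  also have "\<dots> = (\<Sum>i\<le>n. coeff f i * z ^ i)" by (simp only: assms(3))
  also have "\<dots> = (\<Sum>i<Suc n. coeff f i * z ^ i)" by (simp only: lessThan_Suc_atMost)
  also have "\<dots> = (\<Sum>i<n. coeff f i * z ^ i) + coeff f n * z ^ n" by (rule sum.lessThan_Suc)
  also have "\<dots> = z ^ n + (\<Sum>i<n. coeff f i * z ^ i)" using assms(2) by (simp add: add.commute)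
  finally have e: "poly f z = z ^ n + (\<Sum>i<n. coeff f i * z ^ i)" .
  show "z ^ n + (\<Sum>i<n. coeff f i * z ^ i) = 0" by (subst e[symmetric]) (rule assms(4))
qed

lemma det_PV:
  assumes V: "subring V" and M: "M \<in> carrier_mat n n" and ent: "\<And>i j. i < n \<Longrightarrow> j < n \<Longrightarrow> M $$ (i,j) \<in> PV V"
  shows "det M \<in> PV V"
proof -
  have sV: "subring (PV V)" using PV_sr V .
  have sg: "signof p \<in> PV V" for p :: "nat \<Rightarrow> nat"
    by (cases p rule: sign_cases) (auto intro: sr_one sr_uminus sV)
  show ?thesis unfolding det_def'[OF M]
  proof (rule sr_sum[OF sV])
    fix p assume "p \<in> {p. p permutes {0..<n}}"
    then have pp: "p permutes {0..<n}" by simp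
    have pin: "p i < n" if "i < n" for i using permutes_in_image[OF pp, of i] that by simp
    show "signof p * (\<Prod>i = 0..<n. M $$ (i, p i)) \<in> PV V"
      by (rule sr_mult[OF sV sg], rule sr_prod[OF sV], rule ent)
        (auto simp: pin)
  qed
qed

lemma det_trick:
  fixes z :: "'a::comm_ring_1" and g :: "nat \<Rightarrow> 'a" and a :: "nat \<Rightarrow> nat \<Rightarrow> 'a"
  assumes V: "subring V" and n: "0 < n" and g0: "g 0 = 1"
    and a: "\<And>i j. i < n \<Longrightarrow> j < n \<Longrightarrow> a i j \<in> V"
    and rel: "\<And>i. i < n \<Longrightarrow> z * g i = (\<Sum>j<n. a i j * g j)"
  shows "integral_over V z"
proof -
  define A where "A = mat n n (\<lambda>(i,j). a i j)"
  define B where "B = mat n n (\<lambda>(i,j). (if i = j then z else 0) - a i j)"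
  define gv where "gv = vec n g"
  have A: "A \<in> carrier_mat n n" unfolding A_def by simp
  have B: "B \<in> carrier_mat n n" unfolding B_def by simp
  have gv: "gv \<in> carrier_vec n" unfolding gv_def by simp
  have Bg: "B *\<^sub>v gv = 0\<^sub>v n"
  proof (rule eq_vecI)
    fix i assume "i < dim_vec (0\<^sub>v n :: 'a vec)"
    then have i: "i < n" by simp
    have "(B *\<^sub>v gv) $ i = (\<Sum>j\<in>{0..<n}. ((if i = j then z else 0) - a i j) * g j)"
      using i unfolding B_def gv_def by (simp add: scalar_prod_def row_def)
    also have "\<dots> = (\<Sum>j\<in>{0..<n}. (if i = j then z * g j else 0) - a i j * g j)"
      by (rule sum.cong) (auto simp: left_diff_distrib)
    also have "\<dots> = (\<Sum>j\<in>{0..<n}. (if i = j then z * g j else 0)) - (\<Sum>j\<in>{0..<n}. a i j * g j)"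
      by (rule sum_subtractf)
    also have "\<dots> = z * g i - (\<Sum>j<n. a i j * g j)"
      using i by (simp add: atLeast0LessThan)
    also have "\<dots> = 0" using rel[OF i] by simp
    finally show "(B *\<^sub>v gv) $ i = 0\<^sub>v n $ i" using i by simp
  qed (simp add: B_def)
  have "(adj_mat B * B) *\<^sub>v gv = adj_mat B *\<^sub>v (B *\<^sub>v gv)"
    using adj_mat(1)[OF B] B gv by (rule assoc_mult_mat_vec)
  also have "\<dots> = 0\<^sub>v n" unfolding Bg using adj_mat(1)[OF B]
    by (intro eq_vecI) (auto simp: scalar_prod_def)
  finally have z1: "(det B \<cdot>\<^sub>m 1\<^sub>m n) *\<^sub>v gv = 0\<^sub>v n" unfolding adj_mat(3)[OF B] .
  have "((det B \<cdot>\<^sub>m 1\<^sub>m n) *\<^sub>v gv) $ 0 = (\<Sum>j\<in>{0..<n}. (if 0 = j then det B else 0) * g j)"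
    using n unfolding gv_def by (auto simp: scalar_prod_def row_def intro!: sum.cong)
  also have "\<dots> = (\<Sum>j\<in>{0..<n}. (if 0 = j then det B * g j else 0))"
    by (rule sum.cong) auto
  also have "\<dots> = det B * g 0" using n by (simp add: sum.delta')
  finally have detB: "det B = 0" using z1 n g0 by simp
  have "poly (char_poly A) z = det B"
    unfolding char_poly_def
    by (rule poly_det_cong[of B n], insert A B, auto simp: char_poly_matrix_def A_def B_def)
  then have p0: "poly (char_poly A) z = 0" using detB by simp
  have PVc: "char_poly A \<in> PV V"
    unfolding char_poly_def
  proof (rule det_PV[OF V])
    show "char_poly_matrix A \<in> carrier_mat n n" using A by simp
    fix i j assume ij: "i < n" "j < n"
    have sV: "subring (PV V)" using PV_sr[OF V] .
    have x: "[:0, 1:] \<in> PV V" using PV_monom[OF V sr_one[OF V], of 1] by (simp add: monom_Suc one_pCons)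
    have "char_poly_matrix A $$ (i, j) = [:0, 1:] * (if i = j then 1 else 0) + [:- a i j:]"
      using ij A unfolding char_poly_matrix_def A_def by simp
    also have "\<dots> \<in> PV V"
      by (intro sr_add[OF sV] sr_mult[OF sV x] PV_const[OF V] sr_uminus[OF V] a ij)
        (simp add: sr_one[OF sV] sr_zero[OF sV])
    finally show "char_poly_matrix A $$ (i, j) \<in> PV V" .
  qed
  show ?thesis
    using integral_of_monic[OF PVc _ _ p0, of n] degree_monic_char_poly[OF A] by blast
qed

definition adjoin :: "'a::comm_ring_1 set \<Rightarrow> 'a \<Rightarrow> 'a set" where
  "adjoin V t = {poly p t | p. p \<in> PV V}"

lemma PV_mono: "V \<subseteq> W \<Longrightarrow> PV V \<subseteq> PV W"
  unfolding PV_def by auto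

lemma adj_sr: assumes V: "subring V" shows "subring (adjoin V t)"
proof -
  have sV: "subring (PV V)" using PV_sr[OF V] .
  have "1 \<in> adjoin V t" unfolding adjoin_def
    using sr_one[OF sV] by (intro CollectI exI[of _ 1]) simp
  moreover have "a - b \<in> adjoin V t \<and> a * b \<in> adjoin V t"
    if "a \<in> adjoin V t" "b \<in> adjoin V t" for a b
  proof -
    from that obtain p q where p: "p \<in> PV V" "a = poly p t" and q: "q \<in> PV V" "b = poly q t"
      unfolding adjoin_def by blast
    have "a - b = poly (p - q) t" "a * b = poly (p * q) t" using p q by simp_all
    then show ?thesis unfolding adjoin_def
      using sr_diff[OF sV p(1) q(1)] sr_mult[OF sV p(1) q(1)] by blast
  qed
  ultimately show ?thesis unfolding subring_def by blast
qed

lemma adj_base: assumes V: "subring V" shows "V \<subseteq> adjoin V t"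
proof
  fix a assume a: "a \<in> V"
  have "a = poly [:a:] t" by simp
  then show "a \<in> adjoin V t" unfolding adjoin_def using PV_const[OF V a] by blast
qed

lemma adj_gen: assumes V: "subring V" shows "t \<in> adjoin V t"
proof -
  have "t = poly (monom 1 1) t" by (simp add: poly_monom)
  then show ?thesis unfolding adjoin_def using PV_monom[OF V sr_one[OF V]] by blast
qed

lemma adj_min: assumes W: "subring W" and VW: "V \<subseteq> W" and t: "t \<in> W"
  shows "adjoin V t \<subseteq> W"
proof
  fix a assume "a \<in> adjoin V t"
  then obtain p where p: "p \<in> PV V" "a = poly p t" unfolding adjoin_def by blast
  have "p \<in> PV W" using p(1) PV_mono[OF VW] by blast
  then show "a \<in> W" using poly_in_sr[OF W t] p(2) by simp
qed

lemma adj_mono: "V \<subseteq> W \<Longrightarrow> adjoin V t \<subseteq> adjoin W t"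
  unfolding adjoin_def using PV_mono by blast

lemma id_sub: "ideal_in Q T \<Longrightarrow> q \<in> Q \<Longrightarrow> q \<in> T" by (auto simp: ideal_in_def)
lemma id_zero: "ideal_in Q T \<Longrightarrow> 0 \<in> Q" by (auto simp: ideal_in_def)
lemma id_diff: "ideal_in Q T \<Longrightarrow> a \<in> Q \<Longrightarrow> b \<in> Q \<Longrightarrow> a - b \<in> Q" by (auto simp: ideal_in_def)
lemma id_mult: "ideal_in Q T \<Longrightarrow> a \<in> Q \<Longrightarrow> t \<in> T \<Longrightarrow> t * a \<in> Q" by (auto simp: ideal_in_def)
lemma id_mult2: "ideal_in Q T \<Longrightarrow> a \<in> Q \<Longrightarrow> t \<in> T \<Longrightarrow> a * t \<in> Q"
  using id_mult[of Q T a t] by (simp add: mult.commute)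
lemma id_uminus: "ideal_in Q T \<Longrightarrow> a \<in> Q \<Longrightarrow> - a \<in> Q"
  using id_diff[of Q T 0 a] id_zero[of Q T] by simp
lemma id_add: "ideal_in Q T \<Longrightarrow> a \<in> Q \<Longrightarrow> b \<in> Q \<Longrightarrow> a + b \<in> Q"
  using id_diff[of Q T a "- b"] id_uminus[of Q T b] by simp
lemma id_sum: "ideal_in Q T \<Longrightarrow> (\<And>i. i \<in> A \<Longrightarrow> f i \<in> Q) \<Longrightarrow> sum f A \<in> Q"
  by (induction A rule: infinite_finite_induct) (auto simp: id_zero id_add)

lemma id_pow1:
  assumes Q: "ideal_in Q T" and T: "subring T" and w: "w \<in> T" and w1: "w - 1 \<in> Q"
  shows "w ^ k - 1 \<in> Q"
proof (induction k)
  case 0 then show ?case using id_zero[OF Q] by simp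
next
  case (Suc k)
  have "w ^ Suc k - 1 = w * (w ^ k - 1) + (w - 1)" by (simp add: algebra_simps)
  also have "\<dots> \<in> Q" by (rule id_add[OF Q id_mult[OF Q Suc w] w1])
  finally show ?case .
qed

lemma poly_lt: fixes r :: "'a::comm_ring_1 poly" assumes "degree r < n" shows "poly r t = (\<Sum>j<n. coeff r j * t ^ j)"
proof -
  have "poly r t = (\<Sum>j\<le>degree r. coeff r j * t ^ j)" by (rule poly_altdef)
  also have "\<dots> = (\<Sum>j<n. coeff r j * t ^ j)"
    by (rule sum.mono_neutral_left) (use assms in \<open>auto simp: coeff_eq_0\<close>)
  finally show ?thesis .
qed

lemma reduce:
  fixes f r :: "'a::comm_ring_1 poly"
  assumes V: "subring V" and f: "f \<in> PV V" and fn: "coeff f n = 1" and fd: "degree f \<le> n"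
    and n: "0 < n" and ft: "poly f t = 0"
  shows "r \<in> PV V \<Longrightarrow> \<exists>r'. r' \<in> PV V \<and> degree r' < n \<and> poly r' t = poly r t"
proof (induction "degree r" arbitrary: r rule: less_induct)
  case less
  show ?case
  proof (cases "degree r < n")
    case True then show ?thesis using less.prems by blast
  next
    case False
    define d where "d = degree r"
    have nd: "n \<le> d" using False d_def by simp
    define c where "c = coeff r d"
    have sV: "subring (PV V)" using PV_sr[OF V] .
    have cV: "c \<in> V" using less.prems unfolding PV_def c_def by simp
    define r1 where "r1 = r - monom c (d - n) * f"
    have r1V: "r1 \<in> PV V" unfolding r1_def
      by (rule sr_diff[OF sV less.prems sr_mult[OF sV PV_monom[OF V cV] f]])
    have pr1: "poly r1 t = poly r t" unfolding r1_def using ft by simp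
    have "degree (monom c (d - n) * f) \<le> (d - n) + n"
      using degree_mult_le[of "monom c (d - n)" f] degree_monom_le[of c "d - n"] fd by linarith
    then have dm: "degree (monom c (d - n) * f) \<le> d" using nd by simp
    have rd: "degree r \<le> d" by (simp add: d_def)
    have dr1: "degree r1 \<le> d" unfolding r1_def by (rule degree_diff_le[OF rd dm])
    have "coeff (monom c (d - n) * f) d = c * coeff f n"
      using nd by (simp add: coeff_monom_mult)
    then have cr1: "coeff r1 d = 0" unfolding r1_def using fn c_def by simp
    have "degree r1 < d"
    proof (cases "r1 = 0")
      case True then show ?thesis using nd n by simp
    next
      case False
      then have "coeff r1 (degree r1) \<noteq> 0" by simp
      then have "degree r1 \<noteq> d" using cr1 by auto
      then show ?thesis using dr1 by simp
    qed
    then obtain r' where "r' \<in> PV V" "degree r' < n" "poly r' t = poly r1 t"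
      using less.hyps[of r1] r1V d_def by blast
    then show ?thesis using pr1 by auto
  qed
qed

lemma int_adjoin:
  fixes t z :: "'a::comm_ring_1"
  assumes V: "subring V" and ti: "integral_over V t" and z: "z \<in> adjoin V t"
  shows "integral_over V z"
proof -
  obtain n c where c: "\<forall>i<n. c i \<in> V" and rel: "t ^ n + (\<Sum>i<n. c i * t ^ i) = 0"
    using ti unfolding integral_over_def by blast
  show ?thesis
  proof (cases "n = 0")
    case True
    then have "(1::'a) = 0" using rel by simp
    then show ?thesis unfolding integral_over_def by (intro exI[of _ 0]) simp
  next
    case False
    then have n: "0 < n" by simp
    have sV: "subring (PV V)" using PV_sr[OF V] .
    define f where "f = monom 1 n + (\<Sum>i<n. monom (c i) i)"
    have fV: "f \<in> PV V" unfolding f_def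
      by (intro sr_add[OF sV] sr_sum[OF sV] PV_monom[OF V] sr_one[OF V]) (use c in auto)
    have fn: "coeff f n = 1" unfolding f_def by (simp add: coeff_sum)
    have fd: "degree f \<le> n" unfolding f_def
      by (rule degree_le) (simp add: coeff_sum)
    have ft: "poly f t = 0" unfolding f_def using rel by (simp add: poly_sum poly_monom)
    obtain p where p: "p \<in> PV V" "z = poly p t" using z unfolding adjoin_def by blast
    have "\<forall>i. \<exists>r. r \<in> PV V \<and> degree r < n \<and> poly r t = z * t ^ i"
    proof
      fix i
      have "p * monom 1 i \<in> PV V" by (rule sr_mult[OF sV p(1) PV_monom[OF V sr_one[OF V]]])
      moreover have "poly (p * monom 1 i) t = z * t ^ i" using p(2) by (simp add: poly_monom)
      ultimately show "\<exists>r. r \<in> PV V \<and> degree r < n \<and> poly r t = z * t ^ i"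
        using reduce[OF V fV fn fd n ft, of "p * monom 1 i"] by metis
    qed
    from choice[OF this] obtain rr where rr: "\<And>i. rr i \<in> PV V \<and> degree (rr i) < n \<and> poly (rr i) t = z * t ^ i"
      by blast
    show ?thesis
    proof (rule det_trick[OF V n, of "\<lambda>i. t ^ i" "\<lambda>i j. coeff (rr i) j"])
      show "(\<lambda>i. t ^ i) 0 = 1" by simp
      show "coeff (rr i) j \<in> V" for i j using rr[of i] unfolding PV_def by simp
      show "z * t ^ i = (\<Sum>j<n. coeff (rr i) j * t ^ j)" for i
        using rr[of i] poly_lt[of "rr i" n t] by simp
    qed
  qed
qed

lemma unit_trick:
  fixes x y :: "'a::comm_ring_1"
  assumes T: "subring T" and Q: "ideal_in Q T" and V: "subring V" and VT: "V \<subseteq> T"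
    and QV: "Q \<subseteq> V" and x: "x \<in> T" and y: "y \<in> V" and xy: "x * y - 1 \<in> Q"
    and xi: "integral_over V x"
  shows "x \<in> V"
proof -
  obtain n c where c: "\<forall>i<n. c i \<in> V" and rel: "x ^ n + (\<Sum>i<n. c i * x ^ i) = 0"
    using xi unfolding integral_over_def by blast
  show ?thesis
  proof (cases n)
    case 0
    then have "(1::'a) = 0" using rel by simp
    then have "x = 0" by (metis mult_1_right mult_zero_right)
    then show ?thesis using sr_zero[OF V] by simp
  next
    case (Suc m)
    have yT: "y \<in> T" using y VT by blast
    have xyT: "x * y \<in> T" by (rule sr_mult[OF T x yT])
    have cT: "c i \<in> T" if "i < Suc m" for i using c that Suc VT by blast
    have pw: "(x * y) ^ i - 1 \<in> Q" for i by (rule id_pow1[OF Q T xyT xy])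
    define e where "e = x * ((x * y) ^ m - 1) + (\<Sum>i<Suc m. c i * y ^ (m - i) * ((x * y) ^ i - 1))"
    have eQ: "e \<in> Q" unfolding e_def
    proof (rule id_add[OF Q])
      show "x * ((x * y) ^ m - 1) \<in> Q" by (rule id_mult[OF Q pw x])
      show "(\<Sum>i<Suc m. c i * y ^ (m - i) * ((x * y) ^ i - 1)) \<in> Q"
        by (rule id_sum[OF Q], rule id_mult[OF Q pw], rule sr_mult[OF T cT sr_power[OF T yT]]) simp
    qed
    have s1: "y ^ m * x ^ Suc m = x * (x * y) ^ m" by (simp add: power_mult_distrib algebra_simps)
    have s2: "y ^ m * (c i * x ^ i) = c i * y ^ (m - i) * (x * y) ^ i" if "i < Suc m" for i
    proof -
      have "y ^ m = y ^ (m - i) * y ^ i" using that by (simp add: power_add[symmetric])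
      then show ?thesis by (simp add: power_mult_distrib algebra_simps)
    qed
    have "y ^ m * (x ^ n + (\<Sum>i<n. c i * x ^ i)) = x * (x * y) ^ m + (\<Sum>i<Suc m. c i * y ^ (m - i) * (x * y) ^ i)"
      unfolding Suc distrib_left s1 sum_distrib_left using s2 by simp
    also have "\<dots> = e + x + (\<Sum>i<Suc m. c i * y ^ (m - i))"
      unfolding e_def by (simp add: right_diff_distrib sum_subtractf algebra_simps)
    finally have "e + x + (\<Sum>i<Suc m. c i * y ^ (m - i)) = 0" using rel by simp
    then have "x = (- e) - (\<Sum>i<Suc m. c i * y ^ (m - i))" by (simp add: algebra_simps eq_neg_iff_add_eq_0)
    also have "\<dots> \<in> V"
      by (rule sr_diff[OF V], use QV id_uminus[OF Q eQ] in blast,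
          rule sr_sum[OF V], rule sr_mult[OF V _ sr_power[OF V y]]) (use c Suc in auto)
    finally show ?thesis .
  qed
qed

lemma ypoly:
  fixes x y :: "'a::comm_ring_1"
  assumes T: "subring T" and Q: "ideal_in Q T" and V: "subring V" and VT: "V \<subseteq> T"
    and QV: "Q \<subseteq> V" and x: "x \<in> T" and y: "y \<in> V" and xy: "x * y - 1 \<in> Q"
  shows "p \<in> PV V \<Longrightarrow> degree p \<le> d \<Longrightarrow> y ^ d * poly p x \<in> V"
proof (induction p arbitrary: d)
  case 0 then show ?case using sr_zero[OF V] by simp
next
  case (pCons a p)
  from pCons.prems have cf: "\<And>i. coeff (pCons a p) i \<in> V" by (simp add: PV_def)
  have a: "a \<in> V" using cf[of 0] by simp
  have pV: "p \<in> PV V" unfolding PV_def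
  proof (intro CollectI allI)
    fix i show "coeff p i \<in> V" using cf[of "Suc i"] by simp
  qed
  have yd: "y ^ d * a \<in> V" by (rule sr_mult[OF V sr_power[OF V y] a])
  show ?case
  proof (cases "p = 0")
    case True then show ?thesis using yd by simp
  next
    case False
    then have "Suc (degree p) \<le> d" using pCons.prems(2) by simp
    then obtain d' where d: "d = Suc d'" and dp: "degree p \<le> d'" by (cases d) auto
    have v: "y ^ d' * poly p x \<in> V" by (rule pCons.IH[OF pV dp])
    have vT: "y ^ d' * poly p x \<in> T" using v VT by blast
    have "y ^ d * poly (pCons a p) x = y ^ d * a + (y ^ d' * poly p x) + (x * y - 1) * (y ^ d' * poly p x)"
      unfolding d by (simp add: algebra_simps)
    also have "\<dots> \<in> V"
      by (intro sr_add[OF V] yd v) (use QV id_mult2[OF Q xy vT] in blast)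
    finally show ?thesis .
  qed
qed

lemma loc:
  fixes x y :: "'a::comm_ring_1"
  assumes T: "subring T" and Q: "ideal_in Q T" and V: "subring V" and VT: "V \<subseteq> T"
    and QV: "Q \<subseteq> V" and x: "x \<in> T" and y: "y \<in> V" and xy: "x * y - 1 \<in> Q"
    and icV: "\<forall>z\<in>T. integral_over V z \<longrightarrow> z \<in> V"
    and RV: "R \<subseteq> adjoin V x" and t: "t \<in> T" and ti: "integral_over R t"
  shows "t \<in> adjoin V x"
proof -
  obtain n c where c: "\<forall>i<n. c i \<in> R" and rel: "t ^ n + (\<Sum>i<n. c i * t ^ i) = 0"
    using ti unfolding integral_over_def by blast
  have "\<forall>i. \<exists>p. i < n \<longrightarrow> p \<in> PV V \<and> c i = poly p x"
    using c RV unfolding adjoin_def by blast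
  from choice[OF this] obtain pp where pp: "\<And>i. i < n \<Longrightarrow> pp i \<in> PV V \<and> c i = poly (pp i) x"
    by blast
  define d where "d = (\<Sum>i<n. degree (pp i))"
  have dle: "degree (pp i) \<le> d" if "i < n" for i
    unfolding d_def by (rule member_le_sum) (use that in auto)
  have yc: "y ^ d * c i \<in> V" if "i < n" for i
    using ypoly[OF T Q V VT QV x y xy, of "pp i" d] pp[OF that] dle[OF that] by simp
  have yT: "y \<in> T" using y VT by blast
  define u where "u = y ^ d * t"
  have uT: "u \<in> T" unfolding u_def by (rule sr_mult[OF T sr_power[OF T yT] t])
  define b where "b i = y ^ d * c i * y ^ (d * (n - Suc i))" for i
  have bV: "b i \<in> V" if "i < n" for i
    unfolding b_def by (rule sr_mult[OF V yc[OF that] sr_power[OF V y]])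
  have bu: "b i * u ^ i = y ^ (d * n) * (c i * t ^ i)" if hi: "i < n" for i
  proof -
    obtain k where k: "n = Suc (i + k)" using less_imp_Suc_add[OF hi] by blast
    have "d + d * (n - Suc i) + d * i = d * n" unfolding k by (simp add: algebra_simps)
    then have "y ^ d * y ^ (d * (n - Suc i)) * y ^ (d * i) = y ^ (d * n)"
      by (simp add: power_add[symmetric])
    then show ?thesis unfolding b_def u_def
      by (simp add: power_mult_distrib power_mult algebra_simps)
  qed
  have "u ^ n + (\<Sum>i<n. b i * u ^ i) = y ^ (d * n) * (t ^ n + (\<Sum>i<n. c i * t ^ i))"
    unfolding distrib_left sum_distrib_left using bu
    by (simp add: u_def power_mult_distrib power_mult)
  then have "u ^ n + (\<Sum>i<n. b i * u ^ i) = 0" using rel by simp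
  then have "integral_over V u" unfolding integral_over_def using bV by blast
  then have uV: "u \<in> V" using icV uT by blast
  have xyT: "x * y \<in> T" by (rule sr_mult[OF T x yT])
  define q where "q = t - x ^ d * u"
  have "q = - (t * ((x * y) ^ d - 1))" unfolding q_def u_def
    by (simp add: power_mult_distrib algebra_simps)
  then have qQ: "q \<in> Q" using id_uminus[OF Q id_mult[OF Q id_pow1[OF Q T xyT xy] t]] by simp
  have sV: "subring (PV V)" using PV_sr[OF V] .
  have "monom u d + [:q:] \<in> PV V"
    by (rule sr_add[OF sV PV_monom[OF V uV] PV_const[OF V]]) (use qQ QV in blast)
  moreover have "t = poly (monom u d + [:q:]) x" by (simp add: poly_monom q_def)
  ultimately show ?thesis unfolding adjoin_def by blast
qed

theorem theorem3p4:
  fixes R T Q :: "'a::comm_ring_1 set"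
  assumes "integral_extension R T"
    and "prime_ideal_in Q T"
    and "P = Q \<inter> R"
    and "maximal_subring S R"
    and "integrally_closed_in S R"
    and "conductor S R = P"
    and "units_quot_not_sub R P S"
  shows "\<exists>V. maximal_subring V T \<and> integrally_closed_in V T \<and> conductor V T = Q"
proof -
  have Rs: "subring R" and Ts: "subring T" and RT: "R \<subseteq> T" and intR: "\<forall>t\<in>T. integral_over R t"
    using assms(1) unfolding integral_extension_def by auto
  have Q: "ideal_in Q T" and QT: "Q \<noteq> T" and prime: "\<forall>a\<in>T. \<forall>b\<in>T. a * b \<in> Q \<longrightarrow> a \<in> Q \<or> b \<in> Q"
    using assms(2) unfolding prime_ideal_in_def by auto
  have Ss: "subring S" and SR: "S \<subset> R" and maxS: "\<forall>S'. subring S' \<and> S \<subseteq> S' \<and> S' \<subset> R \<longrightarrow> S' = S"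
    using assms(4) unfolding maximal_subring_def by auto
  have icS: "\<forall>z\<in>R. integral_over S z \<longrightarrow> z \<in> S"
    using assms(5) unfolding integrally_closed_in_def by auto
  obtain x y0 where x: "x \<in> R" and y0: "y0 \<in> R" and xy0: "x * y0 - 1 \<in> P"
    and nx: "\<not> (\<exists>s\<in>S. x - s \<in> P)"
    using assms(7) unfolding units_quot_not_sub_def by blast
  have QTs: "Q \<subseteq> T" using Q unfolding ideal_in_def by auto
  have PQ: "P \<subseteq> Q" and PR: "P \<subseteq> R" using assms(3) by auto
  have PS: "P \<subseteq> S"
  proof
    fix p assume "p \<in> P"
    then have "p \<in> conductor S R" using assms(6) by simp
    then show "p \<in> S" unfolding conductor_def using sr_one[OF Rs] by force
  qed
  have ST: "S \<subseteq> T" using SR RT by blast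
  have xT: "x \<in> T" using x RT by blast
  have xS: "x \<notin> S"
  proof
    assume "x \<in> S"
    moreover have "x - x \<in> P" using assms(3) id_zero[OF Q] sr_zero[OF Rs] by simp
    ultimately show False using nx by blast
  qed
  have adjR: "adjoin S z = R" if z: "z \<in> R" "z \<notin> S" for z
  proof (rule ccontr)
    assume ne: "adjoin S z \<noteq> R"
    have "adjoin S z \<subseteq> R" by (rule adj_min[OF Rs _ z(1)]) (use SR in blast)
    then have "adjoin S z \<subset> R" using ne by blast
    then have "adjoin S z = S" using maxS adj_sr[OF Ss, of z] adj_base[OF Ss, of z] by blast
    then show False using adj_gen[OF Ss, of z] z(2) by blast
  qed
  have Rx: "adjoin S x = R" by (rule adjR[OF x xS])
  have "\<exists>y. y \<in> S \<and> x * y - 1 \<in> Q"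
  proof (cases "y0 \<in> S")
    case True then show ?thesis using xy0 PQ by blast
  next
    case False
    have "x \<in> adjoin S y0" using adjR[OF y0 False] x by simp
    then obtain p where p: "p \<in> PV S" "x = poly p y0" unfolding adjoin_def by blast
    define m where "m = degree p"
    have cpS: "coeff p i \<in> S" for i using p(1) unfolding PV_def by simp
    have cpR: "coeff p i \<in> R" for i using cpS SR by blast
    have cpT: "coeff p i \<in> T" for i using cpS ST by blast
    have xy0T: "x * y0 \<in> T" using sr_mult[OF Rs x y0] RT by blast
    have xy0R: "x * y0 \<in> R" using sr_mult[OF Rs x y0] .
    have pw: "(x * y0) ^ i - 1 \<in> Q" for i by (rule id_pow1[OF Q Ts xy0T]) (use xy0 PQ in blast)
    define w where "w = (\<Sum>i<Suc m. coeff p i * x ^ (m - i) * ((x * y0) ^ i - 1))"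
    have wQ: "w \<in> Q" unfolding w_def
      by (rule id_sum[OF Q], rule id_mult[OF Q pw], rule sr_mult[OF Ts cpT sr_power[OF Ts xT]])
    have wR: "w \<in> R" unfolding w_def
      by (intro sr_sum[OF Rs] sr_mult[OF Rs] sr_diff[OF Rs] cpR sr_power[OF Rs] x xy0R sr_one[OF Rs])
    have wS: "w \<in> S" using wQ wR assms(3) PS by blast
    have "x ^ Suc m = x ^ m * poly p y0" using p(2) by simp
    also have "\<dots> = x ^ m * (\<Sum>i<Suc m. coeff p i * y0 ^ i)"
      unfolding poly_altdef m_def lessThan_Suc_atMost ..
    also have "\<dots> = (\<Sum>i<Suc m. coeff p i * x ^ (m - i) * (x * y0) ^ i)"
      unfolding sum_distrib_left
    proof (rule sum.cong[OF refl])
      fix i assume "i \<in> {..<Suc m}"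
      then have "x ^ m = x ^ (m - i) * x ^ i" by (simp add: power_add[symmetric])
      then show "x ^ m * (coeff p i * y0 ^ i) = coeff p i * x ^ (m - i) * (x * y0) ^ i"
        by (simp add: power_mult_distrib algebra_simps)
    qed
    also have "\<dots> = (\<Sum>i<Suc m. coeff p i * x ^ (m - i)) + w"
      unfolding w_def by (simp add: right_diff_distrib sum_subtractf)
    also have "(\<Sum>i<Suc m. coeff p i * x ^ (m - i)) = (\<Sum>i<Suc m. coeff p (m - i) * x ^ i)"
    proof -
      have "(\<Sum>i<Suc m. coeff p (m - i) * x ^ i) = (\<Sum>i<Suc m. (\<lambda>j. coeff p (m - j) * x ^ j) (Suc m - Suc i))"
        by (rule sum.nat_diff_reindex[symmetric])
      also have "\<dots> = (\<Sum>i<Suc m. coeff p i * x ^ (m - i))"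
        by (rule sum.cong) auto
      finally show ?thesis by simp
    qed
    finally have xe: "x ^ Suc m = (\<Sum>i<Suc m. coeff p (m - i) * x ^ i) + w" .
    define c where "c i = - coeff p (m - i) - (if i = 0 then w else 0)" for i
    have cS: "\<forall>i<Suc m. c i \<in> S" unfolding c_def
      using sr_diff[OF Ss sr_uminus[OF Ss cpS] wS] sr_diff[OF Ss sr_uminus[OF Ss cpS] sr_zero[OF Ss]] by simp
    have "(\<Sum>i<Suc m. c i * x ^ i) = - (\<Sum>i<Suc m. coeff p (m - i) * x ^ i) - (\<Sum>i<Suc m. (if i = 0 then w else 0) * x ^ i)"
      unfolding c_def by (simp add: left_diff_distrib sum_subtractf sum_negf)
    also have "(\<Sum>i<Suc m. (if i = 0 then w else 0) * x ^ i) = w"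
    proof -
      have "(\<lambda>i. (if i = 0 then w else 0) * x ^ i) = (\<lambda>i. if i = 0 then w else 0)" by (rule ext) simp
      then show ?thesis by (simp only:) (subst sum.delta, auto)
    qed
    finally have "x ^ Suc m + (\<Sum>i<Suc m. c i * x ^ i) = 0" using xe by simp
    then have "integral_over S x" unfolding integral_over_def using cS by blast
    then have "x \<in> S" using icS x by blast
    then show ?thesis using xS by blast
  qed
  then obtain y where yS: "y \<in> S" and xy: "x * y - 1 \<in> Q" by blast
  define F where "F = {V. subring V \<and> V \<subseteq> T \<and> S \<subseteq> V \<and> Q \<subseteq> V \<and> x \<notin> V}"
  define B where "B = {s + q | s q. s \<in> S \<and> q \<in> Q}"
  have BF: "B \<in> F"
  proof -
    have "1 \<in> B" unfolding B_def using sr_one[OF Ss] id_zero[OF Q] by force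
    moreover have "a - b \<in> B \<and> a * b \<in> B" if ab: "a \<in> B" "b \<in> B" for a b
    proof -
      obtain s q s' q' where a: "a = s + q" "s \<in> S" "q \<in> Q" and b: "b = s' + q'" "s' \<in> S" "q' \<in> Q"
        using ab unfolding B_def by blast
      have sT: "s \<in> T" "s' \<in> T" using a b ST by auto
      have qT: "q \<in> T" using a QTs by blast
      have "a - b = (s - s') + (q - q')" using a b by simp
      moreover have "s - s' \<in> S" using sr_diff[OF Ss a(2) b(2)] .
      moreover have "q - q' \<in> Q" using id_diff[OF Q a(3) b(3)] .
      moreover have "a * b = s * s' + (s * q' + s' * q + q * q')" using a b by (simp add: algebra_simps)
      moreover have "s * s' \<in> S" using sr_mult[OF Ss a(2) b(2)] .
      moreover have "s * q' + s' * q + q * q' \<in> Q"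
        by (intro id_add[OF Q] id_mult[OF Q] a b sT qT)
      ultimately show ?thesis unfolding B_def by blast
    qed
    moreover have "B \<subseteq> T" unfolding B_def using ST QTs sr_add[OF Ts] by blast
    moreover have "S \<subseteq> B" unfolding B_def using id_zero[OF Q] by force
    moreover have "Q \<subseteq> B" unfolding B_def using sr_zero[OF Ss] by force
    moreover have "x \<notin> B"
    proof
      assume "x \<in> B"
      then obtain s q where "x = s + q" "s \<in> S" "q \<in> Q" unfolding B_def by blast
      moreover have "x - s \<in> R" using sr_diff[OF Rs x] \<open>s \<in> S\<close> SR by blast
      ultimately have "x - s \<in> P" using assms(3) by simp
      then show False using nx \<open>s \<in> S\<close> by blast
    qed
    ultimately show ?thesis unfolding F_def subring_def by blast
  qed
  have "\<exists>M\<in>F. \<forall>X\<in>F. M \<subseteq> X \<longrightarrow> X = M"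
  proof (rule Zorn_Lemma2, intro ballI)
    fix C assume C: "C \<in> chains F"
    then have CF: "C \<subseteq> F" and ch: "\<forall>A\<in>C. \<forall>B\<in>C. A \<subseteq> B \<or> B \<subseteq> A"
      unfolding chains_def chain_subset_def by auto
    show "\<exists>U\<in>F. \<forall>X\<in>C. X \<subseteq> U"
    proof (cases "C = {}")
      case True then show ?thesis using BF by blast
    next
      case False
      then obtain X0 where X0: "X0 \<in> C" by blast
      have "\<Union>C \<in> F" unfolding F_def
      proof (intro CollectI conjI)
        show "subring (\<Union>C)" unfolding subring_def
        proof (intro conjI ballI)
          show "1 \<in> \<Union>C" using X0 CF sr_one unfolding F_def by blast
        next
          fix a b assume "a \<in> \<Union>C" "b \<in> \<Union>C"
          then obtain A1 A2 where "A1 \<in> C" "A2 \<in> C" "a \<in> A1" "b \<in> A2" by blast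
          then obtain A where A: "A \<in> C" "a \<in> A" "b \<in> A" using ch by blast
          then have "subring A" using CF unfolding F_def by blast
          then show "a - b \<in> \<Union>C" "a * b \<in> \<Union>C" using A sr_diff sr_mult by blast+
        qed
        show "\<Union>C \<subseteq> T" using CF unfolding F_def by blast
        show "S \<subseteq> \<Union>C" using X0 CF unfolding F_def by blast
        show "Q \<subseteq> \<Union>C" using X0 CF unfolding F_def by blast
        show "x \<notin> \<Union>C" using CF unfolding F_def by blast
      qed
      then show ?thesis by blast
    qed
  qed
  then obtain V where VF: "V \<in> F" and Vmax: "\<forall>X\<in>F. V \<subseteq> X \<longrightarrow> X = V" by blast
  have Vs: "subring V" and VT: "V \<subseteq> T" and SV: "S \<subseteq> V" and QV: "Q \<subseteq> V" and xV: "x \<notin> V"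
    using VF unfolding F_def by auto
  have yV: "y \<in> V" using yS SV by blast
  have icV: "\<forall>z\<in>T. integral_over V z \<longrightarrow> z \<in> V"
  proof (intro ballI impI)
    fix z assume zT: "z \<in> T" and zi: "integral_over V z"
    show "z \<in> V"
    proof (rule ccontr)
      assume zV: "z \<notin> V"
      have WT: "adjoin V z \<subseteq> T" by (rule adj_min[OF Ts VT zT])
      have VW: "V \<subseteq> adjoin V z" by (rule adj_base[OF Vs])
      have "x \<in> adjoin V z"
      proof (rule ccontr)
        assume "x \<notin> adjoin V z"
        then have "adjoin V z \<in> F" unfolding F_def using adj_sr[OF Vs] WT VW SV QV by blast
        then have "adjoin V z = V" using Vmax VW by blast
        then show False using adj_gen[OF Vs, of z] zV by blast
      qed
      then have "integral_over V x" by (rule int_adjoin[OF Vs zi])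
      then have "x \<in> V" by (rule unit_trick[OF Ts Q Vs VT QV xT yV xy])
      then show False using xV by blast
    qed
  qed
  have RVx: "R \<subseteq> adjoin V x" using adj_mono[OF SV, of x] Rx by simp
  have TVx: "T \<subseteq> adjoin V x"
  proof
    fix t assume t: "t \<in> T"
    show "t \<in> adjoin V x" by (rule loc[OF Ts Q Vs VT QV xT yV xy icV RVx t]) (use intR t in blast)
  qed
  have maxV: "maximal_subring V T" unfolding maximal_subring_def
  proof (intro conjI allI impI)
    show "subring V" by (rule Vs)
    show "V \<subset> T" using VT xT xV by blast
    fix W assume W: "subring W \<and> V \<subseteq> W \<and> W \<subset> T"
    show "W = V"
    proof (cases "x \<in> W")
      case True
      then have "adjoin V x \<subseteq> W" using adj_min W by blast
      then show ?thesis using TVx W by blast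
    next
      case False
      then have "W \<in> F" unfolding F_def using W SV QV by blast
      then show ?thesis using Vmax W by blast
    qed
  qed
  have icV': "integrally_closed_in V T" unfolding integrally_closed_in_def using icV by blast
  have VR: "V \<inter> R = S"
  proof -
    have "subring (V \<inter> R)" using Vs Rs unfolding subring_def by blast
    moreover have "S \<subseteq> V \<inter> R" using SV SR by blast
    moreover have "V \<inter> R \<subset> R" using x xV by blast
    ultimately show ?thesis using maxS by blast
  qed
  have "conductor V T = Q"
  proof
    show "Q \<subseteq> conductor V T" unfolding conductor_def using QTs QV id_mult[OF Q] by blast
    show "conductor V T \<subseteq> Q"
    proof
      fix c assume cC: "c \<in> conductor V T"
      then have cT: "c \<in> T" unfolding conductor_def by blast
      define C where "C = conductor V T"
      have QC: "Q \<subseteq> C" unfolding C_def conductor_def using QTs QV id_mult[OF Q] by blast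
      have Cm: "t * a \<in> C" if "a \<in> C" "t \<in> T" for a t
      proof -
        have aT: "a \<in> T" and ra: "\<forall>r\<in>T. r * a \<in> V" using that unfolding C_def conductor_def by auto
        show ?thesis unfolding C_def conductor_def
        proof (intro CollectI conjI ballI)
          show "t * a \<in> T" by (rule sr_mult[OF Ts that(2) aT])
          fix r assume r: "r \<in> T"
          have "r * (t * a) = (r * t) * a" by (simp add: mult.assoc)
          also have "\<dots> \<in> V" using ra sr_mult[OF Ts r that(2)] by blast
          finally show "r * (t * a) \<in> V" .
        qed
      qed
      have Cd: "a - b \<in> C" if "a \<in> C" "b \<in> C" for a b
      proof -
        have "a \<in> T" "\<forall>r\<in>T. r * a \<in> V" "b \<in> T" "\<forall>r\<in>T. r * b \<in> V"
          using that unfolding C_def conductor_def by auto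
        then show ?thesis unfolding C_def conductor_def
          using sr_diff[OF Ts] sr_diff[OF Vs] by (auto simp: right_diff_distrib)
      qed
      have CR: "d \<in> Q" if "d \<in> C" "d \<in> R" for d
      proof -
        have "\<forall>r\<in>R. r * d \<in> V" using that RT unfolding C_def conductor_def by auto
        then have "\<forall>r\<in>R. r * d \<in> S" using VR sr_mult[OF Rs _ that(2)] by blast
        then have "d \<in> conductor S R" unfolding conductor_def using that(2) by blast
        then show ?thesis using assms(6) PQ by blast
      qed
      show "c \<in> Q"
      proof (rule ccontr)
        assume cQ: "c \<notin> Q"
        define G where "G = {n. \<exists>d. (\<forall>i<n. d i \<in> R) \<and> c ^ n + (\<Sum>i<n. d i * c ^ i) \<in> Q}"
        have "\<exists>n. n \<in> G"
        proof -
          obtain n d where d1: "\<forall>i<n. d i \<in> R" and d2: "c ^ n + (\<Sum>i<n. d i * c ^ i) = 0"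
            using intR cT unfolding integral_over_def by blast
          have "c ^ n + (\<Sum>i<n. d i * c ^ i) \<in> Q" unfolding d2 by (rule id_zero[OF Q])
          then have "n \<in> G" unfolding G_def using d1 by blast
          then show ?thesis by blast
        qed
        define n where "n = (LEAST n. n \<in> G)"
        have nG: "n \<in> G" unfolding n_def using \<open>\<exists>n. n \<in> G\<close> by (rule LeastI_ex)
        have nmin: "k \<notin> G" if "k < n" for k using not_less_Least[of k "\<lambda>n. n \<in> G"] that unfolding n_def by blast
        obtain d where dR: "\<forall>i<n. d i \<in> R" and dQ: "c ^ n + (\<Sum>i<n. d i * c ^ i) \<in> Q"
          using nG unfolding G_def by blast
        show False
        proof (cases n)
          case 0
          then have "1 \<in> Q" using dQ by simp
          then have "T \<subseteq> Q" using id_mult2[OF Q] by fastforce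
          then show False using QT QTs by blast
        next
          case (Suc m)
          have dT: "d i \<in> T" if "i < Suc m" for i using dR Suc that RT by blast
          define w where "w = c ^ m + (\<Sum>i<m. d (Suc i) * c ^ i)"
          have wT: "w \<in> T" unfolding w_def
            by (intro sr_add[OF Ts] sr_power[OF Ts cT] sr_sum[OF Ts] sr_mult[OF Ts] dT) auto
          have "c ^ n + (\<Sum>i<n. d i * c ^ i) = c * w + d 0"
            unfolding Suc w_def sum.lessThan_Suc_shift
            by (simp add: distrib_left sum_distrib_left algebra_simps)
          then have e: "c * w + d 0 \<in> Q" using dQ by simp
          have cwC: "c * w \<in> C" using Cm[OF _ wT] cC unfolding C_def by (simp add: mult.commute)
          have "d 0 = (c * w + d 0) - c * w" by simp
          also have "\<dots> \<in> C" using Cd[OF _ cwC] e QC by blast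
          finally have "d 0 \<in> Q" using CR dR Suc by blast
          then have "c * w + d 0 - d 0 \<in> Q" by (rule id_diff[OF Q e])
          then have "c * w \<in> Q" by simp
          then have "w \<in> Q" using prime cT wT cQ by blast
          then have "m \<in> G" unfolding G_def w_def using dR Suc by (intro CollectI exI[of _ "\<lambda>i. d (Suc i)"]) auto
          then show False using nmin Suc by blast
        qed
      qed
    qed
  qed
  then show ?thesis using maxV icV' by blast
qed

end
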